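(* Let $X_1,X_2,\dots$ be a sequence of non-negative random variables converging in distribution to a random variable $X$ with $\mathbf{E} X^3=\infty$ and $0<\mathbf{E} X^2<\infty$. Assume $\mathbf{E} X_n^2<\infty$ for each $n$ and $\lim_n\mathbf{E} X_n^2=\mathbf{E} X^2$. Let $\{m_n\}$ be an integer sequence with $m_n\uparrow+\infty$ and, for every $n$, let $X_{n,1},\dots,X_{n,m_n}$ be iid copies of $X_n$. Let $S_{X,n}=\sum_{j\in[m_n]}X_{n,j}^3$. Then, as $n\to\infty$, $$m_n^{-3}\sum_{\{j,k\}\subset[m_n]}X_{n,j}^3X_{n,k}^3=o_P(S_{X,n}),\qquad m_n^{-3}\sum_{\{j,k,r\}\subset[m_n]}X_{n,j}^2X_{n,k}^2X_{n,r}^2=o_P(S_{X,n}),$$ $$m_n^{-1}\sum_{\{j,k\}\subset[m_n]}X_{n,j}^2X_{n,k}^2=o_P(S_{X,n}).$$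
   Context: $[k]=\{1,\dots,k\}$; sums over $\{j,k\}\subset[m_n]$ (resp. $\{j,k,r\}$) range over 2-element (resp. 3-element) subsets. $A_n=o_P(B_n)$ means $A_n/B_n\to0$ in probability. *)

theory Defs
  imports "HOL-Probability.Probability"
begin

definition small_o_P :: "(nat \<Rightarrow> 'a measure) \<Rightarrow> (nat \<Rightarrow> 'a \<Rightarrow> real) \<Rightarrow> (nat \<Rightarrow> 'a \<Rightarrow> real) \<Rightarrow> bool" where
  "small_o_P \<Omega> A B \<longleftrightarrow>
     (\<forall>e>0. (\<lambda>n. measure (\<Omega> n) {\<omega> \<in> space (\<Omega> n). \<bar>A n \<omega> / B n \<omega>\<bar> > e}) \<longlonglongrightarrow> 0)"

end

theory Submission
  imports Defs
begin

lemma esym_le: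
  fixes a :: "nat \<Rightarrow> real"
  assumes "finite I" "\<And>i. i \<in> I \<Longrightarrow> 0 \<le> a i"
  shows "(\<Sum>J\<in>{J. J \<subseteq> I \<and> card J = k}. \<Prod>j\<in>J. a j) \<le> (\<Sum>i\<in>I. a i) ^ k"
  using assms
proof (induction I arbitrary: k rule: finite_induct)
  case empty
  have "{J. J \<subseteq> ({}::nat set) \<and> card J = k} = (if k = 0 then {{}} else {})" by auto
  then show ?case by simp
next
  case (insert x F)
  have nn: "\<And>i. i \<in> F \<Longrightarrow> 0 \<le> a i" using insert by auto
  have ax: "0 \<le> a x" using insert by auto
  define s where "s = (\<Sum>i\<in>F. a i)"
  have s0: "0 \<le> s" unfolding s_def using nn by (simp add: sum_nonneg)
  show ?case
  proof (cases k)
    case 0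
    have "{J. J \<subseteq> insert x F \<and> card J = k} = {{}}" using 0 insert(1) 
      by (auto dest: finite_subset[of _ "insert x F"])
    then show ?thesis using 0 by simp
  next
    case (Suc k')
    have split: "{J. J \<subseteq> insert x F \<and> card J = k} =
       {J. J \<subseteq> F \<and> card J = k} \<union> insert x ` {J. J \<subseteq> F \<and> card J = k'}"
    proof (intro equalityI subsetI)
      fix J assume J: "J \<in> {J. J \<subseteq> insert x F \<and> card J = k}"
      show "J \<in> {J. J \<subseteq> F \<and> card J = k} \<union> insert x ` {J. J \<subseteq> F \<and> card J = k'}"
      proof (cases "x \<in> J")
        case True
        have "finite J" using J insert(1) finite_subset by auto
        then have "card (J - {x}) = k'" using J True Suc by auto
        moreover have "J = insert x (J - {x})" using True by auto
        ultimately show ?thesis using J by blast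
      next
        case False then show ?thesis using J by auto
      qed
    next
      fix J assume J: "J \<in> {J. J \<subseteq> F \<and> card J = k} \<union> insert x ` {J. J \<subseteq> F \<and> card J = k'}"
      then show "J \<in> {J. J \<subseteq> insert x F \<and> card J = k}"
      proof
        assume "J \<in> {J. J \<subseteq> F \<and> card J = k}" then show ?thesis by auto
      next
        assume "J \<in> insert x ` {J. J \<subseteq> F \<and> card J = k'}"
        then obtain J' where "J' \<subseteq> F" "card J' = k'" "J = insert x J'" by auto
        moreover have "finite J'" using \<open>J' \<subseteq> F\<close> insert(1) finite_subset by auto
        moreover have "x \<notin> J'" using \<open>J' \<subseteq> F\<close> insert(2) by auto
        ultimately show ?thesis using insert(2) Suc by auto
      qed
    qed
    have fin1: "finite {J. J \<subseteq> F \<and> card J = k}" using insert(1) by simp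
    have fin2: "finite (insert x ` {J. J \<subseteq> F \<and> card J = k'})" using insert(1) by simp
    have disj: "{J. J \<subseteq> F \<and> card J = k} \<inter> insert x ` {J. J \<subseteq> F \<and> card J = k'} = {}"
      using insert(2) by auto
    have inj: "inj_on (insert x) {J. J \<subseteq> F \<and> card J = k'}"
      using insert(2) unfolding inj_on_def by (metis Diff_insert_absorb in_mono mem_Collect_eq)
    have "(\<Sum>J\<in>{J. J \<subseteq> insert x F \<and> card J = k}. \<Prod>j\<in>J. a j) =
       (\<Sum>J\<in>{J. J \<subseteq> F \<and> card J = k}. \<Prod>j\<in>J. a j) + (\<Sum>J\<in>insert x ` {J. J \<subseteq> F \<and> card J = k'}. \<Prod>j\<in>J. a j)"
      unfolding split by (rule sum.union_disjoint[OF fin1 fin2 disj])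
    also have "(\<Sum>J\<in>insert x ` {J. J \<subseteq> F \<and> card J = k'}. \<Prod>j\<in>J. a j)
       = (\<Sum>J\<in>{J. J \<subseteq> F \<and> card J = k'}. \<Prod>j\<in>insert x J. a j)"
      by (rule sum.reindex[OF inj, unfolded comp_def])
    also have "\<dots> = (\<Sum>J\<in>{J. J \<subseteq> F \<and> card J = k'}. a x * (\<Prod>j\<in>J. a j))"
    proof (rule sum.cong[OF refl])
      fix J assume "J \<in> {J. J \<subseteq> F \<and> card J = k'}"
      then have "finite J" "x \<notin> J" using insert(1,2) finite_subset by auto
      then show "(\<Prod>j\<in>insert x J. a j) = a x * (\<Prod>j\<in>J. a j)" by simp
    qed
    also have "\<dots> = a x * (\<Sum>J\<in>{J. J \<subseteq> F \<and> card J = k'}. (\<Prod>j\<in>J. a j))"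
      by (simp add: sum_distrib_left)
    finally have eq: "(\<Sum>J\<in>{J. J \<subseteq> insert x F \<and> card J = k}. \<Prod>j\<in>J. a j) =
       (\<Sum>J\<in>{J. J \<subseteq> F \<and> card J = k}. \<Prod>j\<in>J. a j) + a x * (\<Sum>J\<in>{J. J \<subseteq> F \<and> card J = k'}. (\<Prod>j\<in>J. a j))" .
    have IH1: "(\<Sum>J\<in>{J. J \<subseteq> F \<and> card J = k}. \<Prod>j\<in>J. a j) \<le> s ^ k"
      using insert.IH nn unfolding s_def by blast
    have IH2: "(\<Sum>J\<in>{J. J \<subseteq> F \<and> card J = k'}. \<Prod>j\<in>J. a j) \<le> s ^ k'"
      using insert.IH nn unfolding s_def by blast
    have "(\<Sum>J\<in>{J. J \<subseteq> insert x F \<and> card J = k}. \<Prod>j\<in>J. a j) \<le> s ^ k + a x * s ^ k'"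
      unfolding eq using IH1 IH2 ax by (intro add_mono mult_left_mono) auto
    also have "\<dots> \<le> (s + a x) ^ k"
    proof -
      have "s ^ k' \<le> (s + a x) ^ k'" using s0 ax by (intro power_mono) auto
      then have "s * s ^ k' + a x * s ^ k' \<le> s * (s + a x) ^ k' + a x * (s + a x) ^ k'"
        using s0 ax by (intro add_mono mult_left_mono) auto
      then show ?thesis using Suc by (simp add: algebra_simps)
    qed
    finally show ?thesis using insert(1,2) by (simp add: s_def add.commute)
  qed
qed

lemma cube_sum_le:
  fixes a :: "nat \<Rightarrow> real"
  assumes "finite I" "\<And>i. i \<in> I \<Longrightarrow> 0 \<le> a i"
  shows "(\<Sum>i\<in>I. a i ^ 3) ^ 2 \<le> (\<Sum>i\<in>I. a i ^ 2) ^ 3"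
proof -
  define T where "T = (\<Sum>i\<in>I. a i ^ 2)"
  have T0: "0 \<le> T" unfolding T_def by (simp add: sum_nonneg)
  have "\<And>i. i \<in> I \<Longrightarrow> a i ^ 2 \<le> T"
    unfolding T_def using assms by (intro member_le_sum) auto
  then have ai: "\<And>i. i \<in> I \<Longrightarrow> a i \<le> sqrt T"
    using assms(2) by (metis real_le_rsqrt)
  have "(\<Sum>i\<in>I. a i ^ 3) \<le> (\<Sum>i\<in>I. sqrt T * a i ^ 2)"
  proof (rule sum_mono)
    fix i assume "i \<in> I"
    then have "a i * a i ^ 2 \<le> sqrt T * a i ^ 2" using ai assms(2) by (intro mult_right_mono) auto
    then show "a i ^ 3 \<le> sqrt T * a i ^ 2" by (simp add: power3_eq_cube power2_eq_square)
  qed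
  also have "\<dots> = sqrt T * T" unfolding T_def by (simp add: sum_distrib_left)
  finally have le: "(\<Sum>i\<in>I. a i ^ 3) \<le> sqrt T * T" .
  have ge: "0 \<le> (\<Sum>i\<in>I. a i ^ 3)" using assms(2) by (simp add: sum_nonneg)
  have "(\<Sum>i\<in>I. a i ^ 3) ^ 2 \<le> (sqrt T * T) ^ 2" using le ge by (intro power_mono) auto
  also have "\<dots> = T ^ 3" using T0 by (simp add: power_mult_distrib power3_eq_cube power2_eq_square)
  finally show ?thesis unfolding T_def .
qed


lemma final_combine:
  fixes \<Omega> :: "nat \<Rightarrow> 'a measure" and R T S :: "nat \<Rightarrow> 'a \<Rightarrow> real" and m :: "nat \<Rightarrow> nat"
  assumes prob: "\<And>n. prob_space (\<Omega> n)"
    and Tm: "\<And>n. T n \<in> borel_measurable (\<Omega> n)"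
    and Sm: "\<And>n. S n \<in> borel_measurable (\<Omega> n)"
    and C: "(C::real) > 0"
    and A: "\<And>L n. L > 0 \<Longrightarrow> m n > 0 \<Longrightarrow> measure (\<Omega> n) {\<omega>\<in>space (\<Omega> n). T n \<omega> > L * real (m n)} \<le> C / L"
    and Cc: "\<And>K. (\<lambda>n. measure (\<Omega> n) {\<omega>\<in>space (\<Omega> n). S n \<omega> < K * real (m n)}) \<longlonglongrightarrow> 0"
    and mlim: "filterlim m at_top sequentially"
    and incl: "\<And>L. L > 0 \<Longrightarrow> \<exists>K. \<forall>\<^sub>F n in sequentially. AE \<omega> in \<Omega> n.
                  R n \<omega> > e \<longrightarrow> T n \<omega> > L * real (m n) \<or> S n \<omega> < K * real (m n)"
  shows "(\<lambda>n. measure (\<Omega> n) {\<omega>\<in>space (\<Omega> n). R n \<omega> > e}) \<longlonglongrightarrow> 0"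
proof (rule LIMSEQ_I)
  fix r :: real assume r: "0 < r"
  define L where "L = 2 * C / r"
  have L: "L > 0" using C r by (simp add: L_def)
  have CL: "C / L = r / 2" using C r by (simp add: L_def)
  obtain K where K: "\<forall>\<^sub>F n in sequentially. AE \<omega> in \<Omega> n.
                  R n \<omega> > e \<longrightarrow> T n \<omega> > L * real (m n) \<or> S n \<omega> < K * real (m n)"
    using incl[OF L] by blast
  have ev1: "\<forall>\<^sub>F n in sequentially. measure (\<Omega> n) {\<omega>\<in>space (\<Omega> n). S n \<omega> < K * real (m n)} < r / 2"
    using order_tendstoD(2)[OF Cc[of K], of "r/2"] r by simp
  have ev2: "\<forall>\<^sub>F n in sequentially. m n > 0"
  proof -
    have "\<forall>\<^sub>F n in sequentially. 1 \<le> m n" using mlim by (simp add: filterlim_at_top)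
    then show ?thesis by (rule eventually_mono) auto
  qed
  have "\<forall>\<^sub>F n in sequentially. norm (measure (\<Omega> n) {\<omega>\<in>space (\<Omega> n). R n \<omega> > e} - 0) < r"
    using K ev1 ev2
  proof eventually_elim
    case (elim n)
    interpret P: prob_space "\<Omega> n" by (rule prob)
    have "measure (\<Omega> n) {\<omega>\<in>space (\<Omega> n). R n \<omega> > e} \<le>
          measure (\<Omega> n) ({\<omega>\<in>space (\<Omega> n). T n \<omega> > L * real (m n)} \<union> {\<omega>\<in>space (\<Omega> n). S n \<omega> < K * real (m n)})"
      by (rule P.finite_measure_mono_AE) (use elim(1) Tm[of n] Sm[of n] in \<open>auto elim!: eventually_mono\<close>)
    also have "\<dots> \<le> measure (\<Omega> n) {\<omega>\<in>space (\<Omega> n). T n \<omega> > L * real (m n)} + measure (\<Omega> n) {\<omega>\<in>space (\<Omega> n). S n \<omega> < K * real (m n)}"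
      by (rule measure_Un_le) (use Tm[of n] Sm[of n] in auto)
    also have "\<dots> < C / L + r / 2" using A[OF L elim(3)] elim(2) by linarith
    finally show ?case using CL by simp
  qed
  then show "\<exists>no. \<forall>n\<ge>no. norm (measure (\<Omega> n) {\<omega>\<in>space (\<Omega> n). R n \<omega> > e} - 0) < r"
    by (simp add: eventually_sequentially)
qed




lemma r1:
  fixes E S T L M e :: real
  assumes "0 \<le> E" "E \<le> S^2" "0 \<le> S" "S^2 \<le> T^3" "0 \<le> T" "T \<le> L*M" "1 \<le> M" "L > 0" "e > 0" "L^3 \<le> e^2*M"
  shows "\<bar>E/M^3/S\<bar> \<le> e"
proof (cases "S = 0")
  case True then show ?thesis using assms by simp
next
  case False
  then have S: "S > 0" using assms by simp
  have M: "M > 0" using assms by simp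
  have "E/M^3/S \<le> S^2/M^3/S" using assms S M by (intro divide_right_mono) auto
  also have "\<dots> = S/M^3" using S by (simp add: power2_eq_square)
  finally have a: "E/M^3/S \<le> S/M^3" .
  have "(S/M^3)^2 = S^2/M^6" by (simp add: power_divide flip: power_mult)
  also have "\<dots> \<le> T^3/M^6" using assms M by (intro divide_right_mono) auto
  also have "\<dots> \<le> (L*M)^3/M^6" using assms M by (intro divide_right_mono power_mono) auto
  also have "\<dots> = L^3/M^3" using M by (simp add: power_mult_distrib field_simps eval_nat_numeral)
  also have "\<dots> \<le> L^3/M"
  proof -
    have "M \<le> M^3" using assms by (simp add: power3_eq_cube) (metis mult_le_cancel_right1 mult_less_cancel_right2 mult_left_mono mult_nonneg_nonneg order.trans not_le order_refl)
    then show ?thesis using M assms by (intro divide_left_mono) auto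
  qed
  also have "\<dots> \<le> e^2" using assms M by (simp add: divide_le_eq)
  finally have "S/M^3 \<le> e" using assms by (meson power2_le_imp_le less_le)
  moreover have "0 \<le> E/M^3/S" using assms S M by simp
  ultimately show ?thesis using a by simp
qed

lemma r2:
  fixes E S T L M e K :: real
  assumes "0 \<le> E" "E \<le> T^3" "0 \<le> T" "T \<le> L*M" "1 \<le> M" "L > 0" "e > 0" "K = L^3/e" "S \<ge> K*M"
  shows "\<bar>E/M^3/S\<bar> \<le> e"
proof -
  have M: "M > 0" using assms by simp
  have K: "K > 0" using assms by simp
  have S: "S > 0" using assms M K by (metis mult_pos_pos order_less_le_trans)
  have "E/M^3/S \<le> (L*M)^3/M^3/S" using assms S M by (intro divide_right_mono power_mono order.trans[OF assms(2)]) auto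
  also have "\<dots> = L^3/S" using M by (simp add: power_mult_distrib)
  also have "\<dots> \<le> L^3/(K*M)" using assms S M K by (intro divide_left_mono) auto
  also have "\<dots> \<le> L^3/K"
  proof -
    have KM: "K \<le> K*M" using K assms(5) by (simp add: mult_le_cancel_left1)
    show ?thesis using KM K M assms(6) by (intro divide_left_mono) auto
  qed
  also have "\<dots> = e" using assms by simp
  finally show ?thesis using assms S M by simp
qed

lemma r3:
  fixes E S T L M e K :: real
  assumes "0 \<le> E" "E \<le> T^2" "0 \<le> T" "T \<le> L*M" "1 \<le> M" "L > 0" "e > 0" "K = L^2/e" "S \<ge> K*M"
  shows "\<bar>E/M/S\<bar> \<le> e"
proof -
  have M: "M > 0" using assms by simp
  have K: "K > 0" using assms by simp
  have S: "S > 0" using assms M K by (metis mult_pos_pos order_less_le_trans)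
  have "E/M/S \<le> (L*M)^2/M/S" using assms S M by (intro divide_right_mono power_mono order.trans[OF assms(2)]) auto
  also have "\<dots> = L^2*M/S" using M by (simp add: power2_eq_square)
  also have "\<dots> \<le> L^2*M/(K*M)" using assms S M K by (intro divide_left_mono) auto
  also have "\<dots> = L^2/K" using M by simp
  also have "\<dots> = e" using assms by simp
  finally show ?thesis using assms S M by simp
qed



lemma trunc_unbounded:
  fixes \<nu> :: "real measure"
  assumes distr_nu: "real_distribution \<nu>"
    and third_inf: "(\<integral>\<^sup>+ x. ennreal (x ^ 3) \<partial>\<nu>) = \<infinity>"
  shows "\<exists>M>0. B < (\<integral>x. min (max x 0 ^ 3) M \<partial>\<nu>)"
proof (rule ccontr)
  interpret real_distribution \<nu> by (rule distr_nu)
  assume "\<not> ?thesis"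
  then have le: "\<And>M. M > 0 \<Longrightarrow> (\<integral>x. min (max x 0 ^ 3) M \<partial>\<nu>) \<le> B" using linorder_not_le by blast
  define f where "f k x = ennreal (min (max x 0 ^ 3) (real (Suc k)))" for k x
  have inc: "incseq f"
    unfolding f_def incseq_def le_fun_def by (auto intro!: ennreal_leI)
  have fm: "\<And>k. f k \<in> borel_measurable \<nu>" unfolding f_def by measurable
  have sup: "(SUP k. f k x) = ennreal (x ^ 3)" for x
  proof (rule antisym)
    show "(SUP k. f k x) \<le> ennreal (x ^ 3)"
    proof (rule SUP_least)
      fix k
      show "f k x \<le> ennreal (x ^ 3)"
      proof (cases "x \<ge> 0")
        case True then show ?thesis unfolding f_def by (intro ennreal_leI) auto
      next
        case False
        then have "max x 0 = 0" by simp
        then show ?thesis unfolding f_def by simp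
      qed
    qed
  next
    obtain k0 :: nat where k0: "max x 0 ^ 3 \<le> real k0" using real_arch_simple by blast
    define k where "k = k0"
    have k: "max x 0 ^ 3 \<le> real (Suc k)" using k0 unfolding k_def by simp
    have "ennreal (x ^ 3) = f k x"
    proof (cases "x \<ge> 0")
      case True then show ?thesis unfolding f_def using k by simp
    next
      case False
      then have "x ^ 3 \<le> 0" by (simp add: power_less_zero_eq less_imp_le)
      then show ?thesis unfolding f_def using False by (simp add: ennreal_eq_0_iff)
    qed
    then show "ennreal (x ^ 3) \<le> (SUP k. f k x)" by (metis SUP_upper UNIV_I)
  qed
  have int_eq: "integral\<^sup>N \<nu> (f k) = ennreal (\<integral>x. min (max x 0 ^ 3) (real (Suc k)) \<partial>\<nu>)" for k
    unfolding f_def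
    by (rule nn_integral_eq_integral)
       (auto intro!: integrable_const_bound[where B="real (Suc k)"] simp: abs_le_iff)
  have "\<infinity> = (\<integral>\<^sup>+ x. (SUP k. f k x) \<partial>\<nu>)" using third_inf sup by simp
  also have "\<dots> = (SUP k. integral\<^sup>N \<nu> (f k))"
    by (rule nn_integral_monotone_convergence_SUP[OF inc fm])
  also have "\<dots> \<le> ennreal B"
  proof (rule SUP_least)
    fix k show "integral\<^sup>N \<nu> (f k) \<le> ennreal B"
      unfolding int_eq by (intro ennreal_leI le) auto
  qed
  finally have "\<top> \<le> ennreal B" by simp
  then show False by (simp add: top_unique)
qed

lemma Cc_lemma:
  fixes \<mu> :: "nat \<Rightarrow> real measure" and \<nu> :: "real measure" and m :: "nat \<Rightarrow> nat"
    and \<Omega> :: "nat \<Rightarrow> 'a measure" and Y :: "nat \<Rightarrow> nat \<Rightarrow> 'a \<Rightarrow> real"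
  assumes distr_mu: "\<And>n. real_distribution (\<mu> n)"
    and distr_nu: "real_distribution \<nu>"
    and conv: "weak_conv_m \<mu> \<nu>"
    and third_inf: "(\<integral>\<^sup>+ x. ennreal (x ^ 3) \<partial>\<nu>) = \<infinity>"
    and m_lim: "filterlim m at_top sequentially"
    and prob: "\<And>n. prob_space (\<Omega> n)"
    and indep: "\<And>n. prob_space.indep_vars (\<Omega> n) (\<lambda>_. borel) (Y n) {1..m n}"
    and ident: "\<And>n j. j \<in> {1..m n} \<Longrightarrow> distr (\<Omega> n) borel (Y n j) = \<mu> n"
    and rv: "\<And>n j. j \<in> {1..m n} \<Longrightarrow> Y n j \<in> borel_measurable (\<Omega> n)"
    and nnY: "\<And>n. AE \<omega> in \<Omega> n. \<forall>j\<in>{1..m n}. 0 \<le> Y n j \<omega>"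
  shows "(\<lambda>n. measure (\<Omega> n) {\<omega>\<in>space (\<Omega> n). (\<Sum>j\<in>{1..m n}. Y n j \<omega> ^ 3) < K * real (m n)}) \<longlonglongrightarrow> 0"
proof -
  obtain M where M: "M > 0" and MB: "K + 1 < (\<integral>x. min (max x 0 ^ 3) M \<partial>\<nu>)"
    using trunc_unbounded[OF distr_nu third_inf] by blast
  define g where "g x = min (max x 0 ^ 3) M" for x
  have gm[measurable]: "g \<in> borel_measurable borel" unfolding g_def by measurable
  have g0: "0 \<le> g x" "g x \<le> M" for x using M unfolding g_def by auto
  have gc: "isCont g x" for x unfolding g_def by (intro continuous_intros)
  have lim: "(\<lambda>n. \<integral>x. g x \<partial>\<mu> n) \<longlonglongrightarrow> (\<integral>x. g x \<partial>\<nu>)"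
    by (rule weak_conv_imp_integral_bdd_continuous_conv[OF distr_mu distr_nu conv, of g M])
       (use gc g0 in auto)
  have ev1: "\<forall>\<^sub>F n in sequentially. K + 1 < (\<integral>x. g x \<partial>\<mu> n)"
    using order_tendstoD(1)[OF lim] MB unfolding g_def by blast
  have ev2: "\<forall>\<^sub>F n in sequentially. 1 \<le> m n" using m_lim by (simp add: filterlim_at_top)
  define c where "c = 2 / M^2"
  have c: "c > 0" using M by (simp add: c_def)
  have explim: "(\<lambda>n. exp (- c * real (m n))) \<longlonglongrightarrow> 0"
  proof -
    have "((\<lambda>x::real. exp (- c * x)) \<longlongrightarrow> 0) at_top" using c by real_asymp
    moreover have "filterlim (\<lambda>n. real (m n)) at_top sequentially"
      by (rule filterlim_compose[OF filterlim_real_sequentially m_lim])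
    ultimately show ?thesis by (rule filterlim_compose)
  qed
  have bound: "\<forall>\<^sub>F n in sequentially.
     measure (\<Omega> n) {\<omega>\<in>space (\<Omega> n). (\<Sum>j\<in>{1..m n}. Y n j \<omega> ^ 3) < K * real (m n)} \<le> exp (- c * real (m n))"
    using ev1 ev2
  proof eventually_elim
    case (elim n)
    interpret P: prob_space "\<Omega> n" by (rule prob)
    define E where "E = (\<integral>x. g x \<partial>\<mu> n)"
    have KE: "K + 1 < E" using elim(1) unfolding E_def .
    have KmE: "K * real (m n) \<le> real (m n) * E - real (m n)"
    proof -
      have "K * real (m n) \<le> (E - 1) * real (m n)" using KE by (intro mult_right_mono) auto
      then show ?thesis by (simp add: algebra_simps)
    qed
    have expY: "P.expectation (\<lambda>\<omega>. g (Y n j \<omega>)) = E" if j: "j \<in> {1..m n}" for j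
    proof -
      have "E = (\<integral>x. g x \<partial>(distr (\<Omega> n) borel (Y n j)))" unfolding E_def using ident[OF j] by simp
      also have "\<dots> = P.expectation (\<lambda>\<omega>. g (Y n j \<omega>))" by (rule integral_distr[OF rv[OF j] gm])
      finally show ?thesis by simp
    qed
    interpret H: Hoeffding_ineq "\<Omega> n" "{1..m n}" "\<lambda>j \<omega>. g (Y n j \<omega>)" "\<lambda>_. 0" "\<lambda>_. M" "real (m n) * E"
    proof unfold_locales
      show "P.indep_vars (\<lambda>_. borel) (\<lambda>j \<omega>. g (Y n j \<omega>)) {1..m n}"
        by (rule P.indep_vars_compose2[OF indep[of n]]) auto
      show "\<And>i. i \<in> {1..m n} \<Longrightarrow> AE x in \<Omega> n. g (Y n i x) \<in> {0..M}"
        using g0 by auto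
      show "real (m n) * E \<equiv> (\<Sum>i\<in>{1..m n}. P.expectation (\<lambda>\<omega>. g (Y n i \<omega>)))"
        using expY by simp
    qed simp
    have pos: "(\<Sum>i\<in>{1..m n}. (M - 0)\<^sup>2) > 0" using M elim(2) by simp
    have "measure (\<Omega> n) {\<omega>\<in>space (\<Omega> n). (\<Sum>j\<in>{1..m n}. Y n j \<omega> ^ 3) < K * real (m n)}
        \<le> measure (\<Omega> n) {\<omega>\<in>space (\<Omega> n). (\<Sum>j\<in>{1..m n}. g (Y n j \<omega>)) \<le> real (m n) * E - real (m n)}"
    proof (rule P.finite_measure_mono_AE)
      show "{\<omega>\<in>space (\<Omega> n). (\<Sum>j\<in>{1..m n}. g (Y n j \<omega>)) \<le> real (m n) * E - real (m n)} \<in> sets (\<Omega> n)"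
        using rv[of _ n] by measurable
      show "AE \<omega> in \<Omega> n. \<omega> \<in> {\<omega>\<in>space (\<Omega> n). (\<Sum>j\<in>{1..m n}. Y n j \<omega> ^ 3) < K * real (m n)} \<longrightarrow>
         \<omega> \<in> {\<omega>\<in>space (\<Omega> n). (\<Sum>j\<in>{1..m n}. g (Y n j \<omega>)) \<le> real (m n) * E - real (m n)}"
        using nnY[of n]
      proof eventually_elim
        case (elim \<omega>)
        have "(\<Sum>j\<in>{1..m n}. g (Y n j \<omega>)) \<le> (\<Sum>j\<in>{1..m n}. Y n j \<omega> ^ 3)"
          using elim unfolding g_def by (intro sum_mono) auto
        moreover have "K * real (m n) \<le> real (m n) * E - real (m n)"
          by (rule KmE)
        ultimately show ?case by auto
      qed
    qed
    also have "\<dots> \<le> exp (- 2 * (real (m n))\<^sup>2 / (\<Sum>i\<in>{1..m n}. (M - 0)\<^sup>2))"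
      by (rule H.Hoeffding_ineq_le[OF _ pos]) simp
    also have "\<dots> = exp (- c * real (m n))"
      using M elim(2) by (simp add: c_def power2_eq_square field_simps)
    finally show ?case .
  qed
  show ?thesis
  proof (rule tendsto_sandwich[OF _ bound tendsto_const explim])
    show "\<forall>\<^sub>F n in sequentially. 0 \<le> measure (\<Omega> n) {\<omega>\<in>space (\<Omega> n). (\<Sum>j\<in>{1..m n}. Y n j \<omega> ^ 3) < K * real (m n)}"
      by simp
  qed
qed



theorem lemma4:
  fixes \<mu> :: "nat \<Rightarrow> real measure"   \<comment> \<open>law of X_n\<close>
    and \<nu> :: "real measure"               \<comment> \<open>law of X\<close>
    and m :: "nat \<Rightarrow> nat"
    and \<Omega> :: "nat \<Rightarrow> 'a measure"
    and Y :: "nat \<Rightarrow> nat \<Rightarrow> 'a \<Rightarrow> real"   \<comment> \<open>Y n j = X_{n,j}\<close>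
  assumes distr_mu: "\<And>n. real_distribution (\<mu> n)"
    and distr_nu: "real_distribution \<nu>"
    and nonneg: "\<And>n. AE x in \<mu> n. 0 \<le> x"
    and conv: "weak_conv_m \<mu> \<nu>"
    and third_inf: "(\<integral>\<^sup>+ x. ennreal (x ^ 3) \<partial>\<nu>) = \<infinity>"
    and second_int: "integrable \<nu> (\<lambda>x. x ^ 2)"
    and second_pos: "0 < (\<integral>x. x ^ 2 \<partial>\<nu>)"
    and second_int_n: "\<And>n. integrable (\<mu> n) (\<lambda>x. x ^ 2)"
    and second_lim: "(\<lambda>n. \<integral>x. x ^ 2 \<partial>\<mu> n) \<longlonglongrightarrow> (\<integral>x. x ^ 2 \<partial>\<nu>)"
    and m_mono: "mono m"
    and m_lim: "filterlim m at_top sequentially"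
    and prob: "\<And>n. prob_space (\<Omega> n)"
    and indep: "\<And>n. prob_space.indep_vars (\<Omega> n) (\<lambda>_. borel) (Y n) {1..m n}"
    and ident: "\<And>n j. j \<in> {1..m n} \<Longrightarrow> distr (\<Omega> n) borel (Y n j) = \<mu> n"
  shows
    "small_o_P \<Omega>
       (\<lambda>n \<omega>. (\<Sum>J\<in>{J. J \<subseteq> {1..m n} \<and> card J = 2}. \<Prod>j\<in>J. Y n j \<omega> ^ 3) / real (m n) ^ 3)
       (\<lambda>n \<omega>. \<Sum>j\<in>{1..m n}. Y n j \<omega> ^ 3)
     \<and> small_o_P \<Omega>
       (\<lambda>n \<omega>. (\<Sum>J\<in>{J. J \<subseteq> {1..m n} \<and> card J = 3}. \<Prod>j\<in>J. Y n j \<omega> ^ 2) / real (m n) ^ 3)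
       (\<lambda>n \<omega>. \<Sum>j\<in>{1..m n}. Y n j \<omega> ^ 3)
     \<and> small_o_P \<Omega>
       (\<lambda>n \<omega>. (\<Sum>J\<in>{J. J \<subseteq> {1..m n} \<and> card J = 2}. \<Prod>j\<in>J. Y n j \<omega> ^ 2) / real (m n))
       (\<lambda>n \<omega>. \<Sum>j\<in>{1..m n}. Y n j \<omega> ^ 3)"
  proof -
  have rv: "Y n j \<in> borel_measurable (\<Omega> n)" if "j \<in> {1..m n}" for n j
    using indep[of n] that unfolding prob_space.indep_vars_def[OF prob[of n]] by blast
  have nnY: "AE \<omega> in \<Omega> n. \<forall>j\<in>{1..m n}. 0 \<le> Y n j \<omega>" for n
  proof (rule AE_finite_allI)
    show "finite {1..m n}" by simp
    fix j assume j: "j \<in> {1..m n}"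
    have "AE x in distr (\<Omega> n) borel (Y n j). 0 \<le> x" unfolding ident[OF j] by (rule nonneg)
    then show "AE \<omega> in \<Omega> n. 0 \<le> Y n j \<omega>" by (subst (asm) AE_distr_iff) (auto intro: rv[OF j])
  qed
  define c where "c n = (\<integral>x. x^2 \<partial>\<mu> n)" for n
  obtain C where C: "C > 0" "\<And>n. \<bar>c n\<bar> \<le> C"
    using convergent_imp_Bseq[OF convergentI[OF second_lim]] unfolding Bseq_def c_def by auto
  have sq_int: "integrable (\<Omega> n) (\<lambda>\<omega>. Y n j \<omega> ^ 2)" if j: "j \<in> {1..m n}" for n j
  proof -
    have "integrable (distr (\<Omega> n) borel (Y n j)) (\<lambda>x. x ^ 2)" unfolding ident[OF j] by (rule second_int_n)
    then show ?thesis by (subst (asm) integrable_distr_eq) (auto intro: rv[OF j])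
  qed
  have sq_eq: "(\<integral>\<omega>. Y n j \<omega> ^ 2 \<partial>\<Omega> n) = c n" if j: "j \<in> {1..m n}" for n j
  proof -
    have "c n = (\<integral>x. x ^ 2 \<partial>(distr (\<Omega> n) borel (Y n j)))" unfolding c_def using ident[OF j] by simp
    also have "\<dots> = (\<integral>\<omega>. Y n j \<omega> ^ 2 \<partial>\<Omega> n)" by (rule integral_distr) (auto intro: rv[OF j])
    finally show ?thesis by simp
  qed
  define T where "T n \<omega> = (\<Sum>j\<in>{1..m n}. Y n j \<omega> ^ 2)" for n \<omega>
  define S where "S n \<omega> = (\<Sum>j\<in>{1..m n}. Y n j \<omega> ^ 3)" for n \<omega>
  have Tm: "T n \<in> borel_measurable (\<Omega> n)" for n
    unfolding T_def by (intro borel_measurable_sum borel_measurable_power) (auto intro: rv)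
  have Sm: "S n \<in> borel_measurable (\<Omega> n)" for n
    unfolding S_def by (intro borel_measurable_sum borel_measurable_power) (auto intro: rv)
  have Tnn: "0 \<le> T n \<omega>" for n \<omega> unfolding T_def by (simp add: sum_nonneg)
  have A: "measure (\<Omega> n) {\<omega>\<in>space (\<Omega> n). T n \<omega> > L * real (m n)} \<le> C / L"
    if L: "L > 0" and mn: "m n > 0" for L n
  proof -
    interpret P: prob_space "\<Omega> n" by (rule prob)
    note Tm_meas[measurable] = Tm[of n]
    have intT: "integrable (\<Omega> n) (T n)" unfolding T_def using sq_int[of _ n] by auto
    have ET: "(\<integral>\<omega>. T n \<omega> \<partial>\<Omega> n) = real (m n) * c n"
      unfolding T_def using Bochner_Integration.integral_sum[where I="{1..m n}" and f="\<lambda>j \<omega>. Y n j \<omega> ^ 2"] sq_int[of _ n] sq_eq[of _ n] by simp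
    have Lm: "L * real (m n) > 0" using L mn by simp
    have "measure (\<Omega> n) {\<omega>\<in>space (\<Omega> n). T n \<omega> > L * real (m n)}
        \<le> measure (\<Omega> n) {\<omega>\<in>space (\<Omega> n). T n \<omega> \<ge> L * real (m n)}"
      by (rule P.finite_measure_mono) (auto, measurable)
    also have "\<dots> \<le> (\<integral>\<omega>. T n \<omega> \<partial>\<Omega> n) / (L * real (m n))"
      by (rule integral_Markov_inequality_measure[OF intT, of "space (\<Omega> n)"]) (auto simp: Tnn Lm)
    also have "\<dots> = c n / L" using mn ET by simp
    also have "\<dots> \<le> C / L" using C(2)[of n] L by (intro divide_right_mono) auto
    finally show ?thesis .
  qed
  have Cc: "(\<lambda>n. measure (\<Omega> n) {\<omega>\<in>space (\<Omega> n). S n \<omega> < K * real (m n)}) \<longlonglongrightarrow> 0" for K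
    unfolding S_def
    by (rule Cc_lemma[OF distr_mu distr_nu conv third_inf m_lim prob indep ident rv nnY])
  have mreal: "\<forall>\<^sub>F n in sequentially. Z \<le> real (m n)" for Z
    using filterlim_compose[OF filterlim_real_sequentially m_lim] by (simp add: filterlim_at_top)
  have part1: "small_o_P \<Omega>
       (\<lambda>n \<omega>. (\<Sum>J\<in>{J. J \<subseteq> {1..m n} \<and> card J = 2}. \<Prod>j\<in>J. Y n j \<omega> ^ 3) / real (m n) ^ 3)
       (\<lambda>n \<omega>. \<Sum>j\<in>{1..m n}. Y n j \<omega> ^ 3)"
    unfolding small_o_P_def
  proof (intro allI impI)
    fix e :: real assume e: "e > 0"
    show "(\<lambda>n. measure (\<Omega> n) {\<omega> \<in> space (\<Omega> n). e < \<bar>(\<Sum>J\<in>{J. J \<subseteq> {1..m n} \<and> card J = 2}. \<Prod>j\<in>J. Y n j \<omega> ^ 3) / real (m n) ^ 3 / (\<Sum>j\<in>{1..m n}. Y n j \<omega> ^ 3)\<bar>}) \<longlonglongrightarrow> 0"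
    proof (rule final_combine[OF prob Tm Sm C(1) A Cc m_lim])
      fix L :: real assume L: "L > 0"
      show "\<exists>K. \<forall>\<^sub>F n in sequentially. AE \<omega> in \<Omega> n. e < \<bar>(\<Sum>J\<in>{J. J \<subseteq> {1..m n} \<and> card J = 2}. \<Prod>j\<in>J. Y n j \<omega> ^ 3) / real (m n) ^ 3 / (\<Sum>j\<in>{1..m n}. Y n j \<omega> ^ 3)\<bar>
                  \<longrightarrow> T n \<omega> > L * real (m n) \<or> S n \<omega> < K * real (m n)"
      proof (intro exI)
        show "\<forall>\<^sub>F n in sequentially. AE \<omega> in \<Omega> n. e < \<bar>(\<Sum>J\<in>{J. J \<subseteq> {1..m n} \<and> card J = 2}. \<Prod>j\<in>J. Y n j \<omega> ^ 3) / real (m n) ^ 3 / (\<Sum>j\<in>{1..m n}. Y n j \<omega> ^ 3)\<bar>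
                  \<longrightarrow> T n \<omega> > L * real (m n) \<or> S n \<omega> < 1 * real (m n)"
          using mreal[of "max 1 (L^3 / e^2)"]
        proof eventually_elim
          case (elim n)
          note en = elim
          show ?case using nnY[of n]
          proof eventually_elim
            case (elim \<omega>)
            show ?case
            proof (rule impI, rule ccontr)
              assume gt: "e < \<bar>(\<Sum>J\<in>{J. J \<subseteq> {1..m n} \<and> card J = 2}. \<Prod>j\<in>J. Y n j \<omega> ^ 3) / real (m n) ^ 3 / (\<Sum>j\<in>{1..m n}. Y n j \<omega> ^ 3)\<bar>"
                and nt: "\<not> (T n \<omega> > L * real (m n) \<or> S n \<omega> < 1 * real (m n))"
              have "\<bar>(\<Sum>J\<in>{J. J \<subseteq> {1..m n} \<and> card J = 2}. \<Prod>j\<in>J. Y n j \<omega> ^ 3) / real (m n) ^ 3 / S n \<omega>\<bar> \<le> e"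
              proof (rule r1)
                show "0 \<le> (\<Sum>J\<in>{J. J \<subseteq> {1..m n} \<and> card J = 2}. \<Prod>j\<in>J. Y n j \<omega> ^ 3)"
                  using elim by (intro sum_nonneg prod_nonneg) auto
                show "(\<Sum>J\<in>{J. J \<subseteq> {1..m n} \<and> card J = 2}. \<Prod>j\<in>J. Y n j \<omega> ^ 3) \<le> (S n \<omega>)^2"
                  unfolding S_def using elim by (intro esym_le) auto
                show "0 \<le> S n \<omega>" unfolding S_def using elim by (intro sum_nonneg) auto
                show "(S n \<omega>)^2 \<le> (T n \<omega>)^3" unfolding S_def T_def using elim by (intro cube_sum_le) auto
                show "0 \<le> T n \<omega>" by (rule Tnn)
                show "T n \<omega> \<le> L * real (m n)" using nt by simp
                show "1 \<le> real (m n)" using en by simp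
                show "L^3 \<le> e^2 * real (m n)" using en e by (simp add: divide_le_eq mult.commute)
              qed (use L e in auto)
              then show False using gt unfolding S_def by simp
            qed
          qed
        qed
      qed
    qed
  qed
  have part2: "small_o_P \<Omega>
       (\<lambda>n \<omega>. (\<Sum>J\<in>{J. J \<subseteq> {1..m n} \<and> card J = 3}. \<Prod>j\<in>J. Y n j \<omega> ^ 2) / real (m n) ^ 3)
       (\<lambda>n \<omega>. \<Sum>j\<in>{1..m n}. Y n j \<omega> ^ 3)"
    unfolding small_o_P_def
  proof (intro allI impI)
    fix e :: real assume e: "e > 0"
    show "(\<lambda>n. measure (\<Omega> n) {\<omega> \<in> space (\<Omega> n). e < \<bar>(\<Sum>J\<in>{J. J \<subseteq> {1..m n} \<and> card J = 3}. \<Prod>j\<in>J. Y n j \<omega> ^ 2) / real (m n) ^ 3 / (\<Sum>j\<in>{1..m n}. Y n j \<omega> ^ 3)\<bar>}) \<longlonglongrightarrow> 0"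
    proof (rule final_combine[OF prob Tm Sm C(1) A Cc m_lim])
      fix L :: real assume L: "L > 0"
      show "\<exists>K. \<forall>\<^sub>F n in sequentially. AE \<omega> in \<Omega> n. e < \<bar>(\<Sum>J\<in>{J. J \<subseteq> {1..m n} \<and> card J = 3}. \<Prod>j\<in>J. Y n j \<omega> ^ 2) / real (m n) ^ 3 / (\<Sum>j\<in>{1..m n}. Y n j \<omega> ^ 3)\<bar>
                  \<longrightarrow> T n \<omega> > L * real (m n) \<or> S n \<omega> < K * real (m n)"
      proof (intro exI)
        show "\<forall>\<^sub>F n in sequentially. AE \<omega> in \<Omega> n. e < \<bar>(\<Sum>J\<in>{J. J \<subseteq> {1..m n} \<and> card J = 3}. \<Prod>j\<in>J. Y n j \<omega> ^ 2) / real (m n) ^ 3 / (\<Sum>j\<in>{1..m n}. Y n j \<omega> ^ 3)\<bar>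
                  \<longrightarrow> T n \<omega> > L * real (m n) \<or> S n \<omega> < (L^3/e) * real (m n)"
          using mreal[of 1]
        proof eventually_elim
          case (elim n)
          note en = elim
          show ?case using nnY[of n]
          proof eventually_elim
            case (elim \<omega>)
            show ?case
            proof (rule impI, rule ccontr)
              assume gt: "e < \<bar>(\<Sum>J\<in>{J. J \<subseteq> {1..m n} \<and> card J = 3}. \<Prod>j\<in>J. Y n j \<omega> ^ 2) / real (m n) ^ 3 / (\<Sum>j\<in>{1..m n}. Y n j \<omega> ^ 3)\<bar>"
                and nt: "\<not> (T n \<omega> > L * real (m n) \<or> S n \<omega> < (L^3/e) * real (m n))"
              have "\<bar>(\<Sum>J\<in>{J. J \<subseteq> {1..m n} \<and> card J = 3}. \<Prod>j\<in>J. Y n j \<omega> ^ 2) / real (m n) ^ 3 / S n \<omega>\<bar> \<le> e"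
              proof (rule r2)
                show "0 \<le> (\<Sum>J\<in>{J. J \<subseteq> {1..m n} \<and> card J = 3}. \<Prod>j\<in>J. Y n j \<omega> ^ 2)"
                  by (intro sum_nonneg prod_nonneg) auto
                show "(\<Sum>J\<in>{J. J \<subseteq> {1..m n} \<and> card J = 3}. \<Prod>j\<in>J. Y n j \<omega> ^ 2) \<le> (T n \<omega>)^3"
                  unfolding T_def by (intro esym_le) auto
                show "0 \<le> T n \<omega>" by (rule Tnn)
                show "T n \<omega> \<le> L * real (m n)" using nt by simp
                show "1 \<le> real (m n)" using en by simp
                show "S n \<omega> \<ge> (L^3/e) * real (m n)" using nt by simp
              qed (use L e in auto)
              then show False using gt unfolding S_def by simp
            qed
          qed
        qed
      qed
    qed
  qed
  have part3: "small_o_P \<Omega>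
       (\<lambda>n \<omega>. (\<Sum>J\<in>{J. J \<subseteq> {1..m n} \<and> card J = 2}. \<Prod>j\<in>J. Y n j \<omega> ^ 2) / real (m n))
       (\<lambda>n \<omega>. \<Sum>j\<in>{1..m n}. Y n j \<omega> ^ 3)"
    unfolding small_o_P_def
  proof (intro allI impI)
    fix e :: real assume e: "e > 0"
    show "(\<lambda>n. measure (\<Omega> n) {\<omega> \<in> space (\<Omega> n). e < \<bar>(\<Sum>J\<in>{J. J \<subseteq> {1..m n} \<and> card J = 2}. \<Prod>j\<in>J. Y n j \<omega> ^ 2) / real (m n) / (\<Sum>j\<in>{1..m n}. Y n j \<omega> ^ 3)\<bar>}) \<longlonglongrightarrow> 0"
    proof (rule final_combine[OF prob Tm Sm C(1) A Cc m_lim])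
      fix L :: real assume L: "L > 0"
      show "\<exists>K. \<forall>\<^sub>F n in sequentially. AE \<omega> in \<Omega> n. e < \<bar>(\<Sum>J\<in>{J. J \<subseteq> {1..m n} \<and> card J = 2}. \<Prod>j\<in>J. Y n j \<omega> ^ 2) / real (m n) / (\<Sum>j\<in>{1..m n}. Y n j \<omega> ^ 3)\<bar>
                  \<longrightarrow> T n \<omega> > L * real (m n) \<or> S n \<omega> < K * real (m n)"
      proof (intro exI)
        show "\<forall>\<^sub>F n in sequentially. AE \<omega> in \<Omega> n. e < \<bar>(\<Sum>J\<in>{J. J \<subseteq> {1..m n} \<and> card J = 2}. \<Prod>j\<in>J. Y n j \<omega> ^ 2) / real (m n) / (\<Sum>j\<in>{1..m n}. Y n j \<omega> ^ 3)\<bar>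
                  \<longrightarrow> T n \<omega> > L * real (m n) \<or> S n \<omega> < (L^2/e) * real (m n)"
          using mreal[of 1]
        proof eventually_elim
          case (elim n)
          note en = elim
          show ?case using nnY[of n]
          proof eventually_elim
            case (elim \<omega>)
            show ?case
            proof (rule impI, rule ccontr)
              assume gt: "e < \<bar>(\<Sum>J\<in>{J. J \<subseteq> {1..m n} \<and> card J = 2}. \<Prod>j\<in>J. Y n j \<omega> ^ 2) / real (m n) / (\<Sum>j\<in>{1..m n}. Y n j \<omega> ^ 3)\<bar>"
                and nt: "\<not> (T n \<omega> > L * real (m n) \<or> S n \<omega> < (L^2/e) * real (m n))"
              have "\<bar>(\<Sum>J\<in>{J. J \<subseteq> {1..m n} \<and> card J = 2}. \<Prod>j\<in>J. Y n j \<omega> ^ 2) / real (m n) / S n \<omega>\<bar> \<le> e"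
              proof (rule r3)
                show "0 \<le> (\<Sum>J\<in>{J. J \<subseteq> {1..m n} \<and> card J = 2}. \<Prod>j\<in>J. Y n j \<omega> ^ 2)"
                  by (intro sum_nonneg prod_nonneg) auto
                show "(\<Sum>J\<in>{J. J \<subseteq> {1..m n} \<and> card J = 2}. \<Prod>j\<in>J. Y n j \<omega> ^ 2) \<le> (T n \<omega>)^2"
                  unfolding T_def by (intro esym_le) auto
                show "0 \<le> T n \<omega>" by (rule Tnn)
                show "T n \<omega> \<le> L * real (m n)" using nt by simp
                show "1 \<le> real (m n)" using en by simp
                show "S n \<omega> \<ge> (L^2/e) * real (m n)" using nt by simp
              qed (use L e in auto)
              then show False using gt unfolding S_def by simp
            qed
          qed
        qed
      qed
    qed
  qed
  show ?thesis using part1 part2 part3 by blast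
qed

end
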